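(* $\mathrm{H}^1(\mathcal{W},\mathcal{W}\wedge\mathcal{W})=0$, where $\mathcal{W}$ acts on $\mathcal{W}\wedge\mathcal{W}$ via the adjoint action. In particular, every Lie bialgebra structure on $\mathcal{W}$ is coboundary.
   Context: The Witt algebra $\mathcal{W}$ has basis $\{L_n\mid n\in\mathbb{Z}\}$ and bracket $[L_m,L_n]=(m-n)L_{m+n}$. For a Lie algebra $L$ and $L$-module $M$, $\mathrm{H}^1(L,M)$ is the quotient of 1-cocycles (linear $d$ with $d([x,y])=x\cdot d(y)-y\cdot d(x)$) by 1-coboundaries ($x\mapsto x\cdot v$). A Lie bialgebra $(L,\delta)$ is a Lie algebra with a cobracket $\delta:L\to L\wedge L$ satisfying the co-Jacobi identity and being a 1-cocycle with values in $L\wedge L$; it is coboundary if $\delta$ is a 1-coboundary. *)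

theory Defs
  imports Complex_Main
begin

text \<open>The Witt algebra over the complex numbers: an element sum_n c_n L_n is
  represented by its finitely supported coefficient function.\<close>

definition W :: "(int \<Rightarrow> complex) set" where
  "W = {f. finite {n. f n \<noteq> 0}}"

definition witt_L :: "int \<Rightarrow> (int \<Rightarrow> complex)" where
  "witt_L n = (\<lambda>k. if k = n then 1 else 0)"

text \<open>Bilinear extension of [L_m, L_n] = (m - n) L_(m+n).\<close>
definition witt_bracket :: "(int \<Rightarrow> complex) \<Rightarrow> (int \<Rightarrow> complex) \<Rightarrow> (int \<Rightarrow> complex)" where
  "witt_bracket f g = (\<lambda>k. \<Sum>m\<in>{m. f m \<noteq> 0}. of_int (2*m - k) * f m * g (k - m))"

text \<open>W tensor W: finitely supported T p q = coefficient of L_p (x) L_q.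
  W wedge W is realised as the antisymmetric tensors (L_m wedge L_n = L_m(x)L_n - L_n(x)L_m).\<close>
definition WW :: "(int \<Rightarrow> int \<Rightarrow> complex) set" where
  "WW = {T. finite {(p,q). T p q \<noteq> 0} \<and> (\<forall>p q. T q p = - T p q)}"

text \<open>Adjoint action x.(a(x)b) = [x,a](x)b + a(x)[x,b].\<close>
definition ad_act :: "(int \<Rightarrow> complex) \<Rightarrow> (int \<Rightarrow> int \<Rightarrow> complex) \<Rightarrow> (int \<Rightarrow> int \<Rightarrow> complex)" where
  "ad_act x T = (\<lambda>p q. \<Sum>a\<in>{a. x a \<noteq> 0}.
      x a * (of_int (2*a - p) * T (p - a) q + of_int (2*a - q) * T p (q - a)))"

definition W_linear_to_WW :: "((int \<Rightarrow> complex) \<Rightarrow> (int \<Rightarrow> int \<Rightarrow> complex)) \<Rightarrow> bool" where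
  "W_linear_to_WW d \<longleftrightarrow>
     (\<forall>f\<in>W. d f \<in> WW) \<and>
     (\<forall>f\<in>W. \<forall>g\<in>W. d (\<lambda>n. f n + g n) = (\<lambda>p q. d f p q + d g p q)) \<and>
     (\<forall>c. \<forall>f\<in>W. d (\<lambda>n. c * f n) = (\<lambda>p q. c * d f p q))"

definition cocycle :: "((int \<Rightarrow> complex) \<Rightarrow> (int \<Rightarrow> int \<Rightarrow> complex)) \<Rightarrow> bool" where
  "cocycle d \<longleftrightarrow> W_linear_to_WW d \<and>
     (\<forall>x\<in>W. \<forall>y\<in>W. d (witt_bracket x y) = (\<lambda>p q. ad_act x (d y) p q - ad_act y (d x) p q))"

definition coboundary :: "((int \<Rightarrow> complex) \<Rightarrow> (int \<Rightarrow> int \<Rightarrow> complex)) \<Rightarrow> bool" where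
  "coboundary d \<longleftrightarrow> W_linear_to_WW d \<and> (\<exists>v\<in>WW. \<forall>x\<in>W. d x = ad_act x v)"

definition delta_tensor_id ::
  "((int \<Rightarrow> complex) \<Rightarrow> (int \<Rightarrow> int \<Rightarrow> complex)) \<Rightarrow> (int \<Rightarrow> int \<Rightarrow> complex) \<Rightarrow> (int \<Rightarrow> int \<Rightarrow> int \<Rightarrow> complex)" where
  "delta_tensor_id \<delta> T = (\<lambda>p q r. \<Sum>m\<in>{m. \<exists>s. T m s \<noteq> 0}. \<delta> (witt_L m) p q * T m r)"

text \<open>co-Jacobi: (1 + xi + xi^2)(delta (x) 1) delta = 0, xi the cyclic permutation
  x1(x)x2(x)x3 -> x2(x)x3(x)x1.\<close>
definition co_jacobi :: "((int \<Rightarrow> complex) \<Rightarrow> (int \<Rightarrow> int \<Rightarrow> complex)) \<Rightarrow> bool" where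
  "co_jacobi \<delta> \<longleftrightarrow> (\<forall>x\<in>W. \<forall>p q r.
      delta_tensor_id \<delta> (\<delta> x) p q r + delta_tensor_id \<delta> (\<delta> x) r p q
      + delta_tensor_id \<delta> (\<delta> x) q r p = 0)"

definition witt_lie_bialgebra :: "((int \<Rightarrow> complex) \<Rightarrow> (int \<Rightarrow> int \<Rightarrow> complex)) \<Rightarrow> bool" where
  "witt_lie_bialgebra \<delta> \<longleftrightarrow> cocycle \<delta> \<and> co_jacobi \<delta>"

end

theory Submission
  imports Defs
begin


definition La :: "int \<Rightarrow> (int \<Rightarrow> int \<Rightarrow> complex) \<Rightarrow> int \<Rightarrow> int \<Rightarrow> complex" where
  "La n T = (\<lambda>p q. of_int (2*n - p) * T (p - n) q + of_int (2*n - q) * T p (q - n))"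

lemma ad_act_L: "ad_act (witt_L n) T = La n T"
proof -
  have "{a. witt_L n a \<noteq> 0} = {n}" by (auto simp: witt_L_def)
  then show ?thesis by (auto simp: ad_act_def La_def witt_L_def)
qed

lemma La_rep: "La m (La n T) p q - La n (La m T) p q = of_int (m-n) * La (m+n) T p q"
proof -
  have h1: "p - n - m = p - (m+n)" "p - m - n = p - (m+n)" "q - n - m = q - (m+n)" "q - m - n = q - (m+n)"
    by auto
  show ?thesis unfolding La_def
    apply (simp only: h1)
    apply (simp add: algebra_simps)
    done
qed

lemma bracket_L: "witt_bracket (witt_L m) (witt_L n) = (\<lambda>k. of_int (m-n) * witt_L (m+n) k)"
proof -
  have "{a. witt_L m a \<noteq> 0} = {m}" by (auto simp: witt_L_def)
  then show ?thesis by (auto simp: witt_bracket_def witt_L_def fun_eq_iff)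
qed

lemma L_in_W: "witt_L n \<in> W"
proof -
  have "{k. witt_L n k \<noteq> 0} = {n}" by (auto simp: witt_L_def)
  then show ?thesis by (simp add: W_def)
qed



lemma up_zero:
  fixes f :: "int \<Rightarrow> complex"
  assumes "f a0 = 0" "\<And>p. p > a0 \<Longrightarrow> b p * f p + c p * f (p-1) = 0" "\<And>p. p > a0 \<Longrightarrow> b p \<noteq> 0"
  shows "p \<ge> a0 \<Longrightarrow> f p = 0"
proof (induction p rule: int_ge_induct)
  case base then show ?case using assms(1) by simp
next
  case (step i)
  have "b (i+1) * f (i+1) + c (i+1) * f i = 0" using assms(2)[of "i+1"] step by simp
  then have "b (i+1) * f (i+1) = 0" using step by simp
  then show ?case using assms(3)[of "i+1"] step by simp
qed

lemma down_zero:
  fixes f :: "int \<Rightarrow> complex"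
  assumes "\<And>p. p \<ge> a0 \<Longrightarrow> b p * f p + c p * f (p+1) = 0" "\<And>p. p \<ge> a0 \<Longrightarrow> b p \<noteq> 0"
    and "\<And>p. p \<ge> M \<Longrightarrow> f p = 0"
  shows "p \<ge> a0 \<Longrightarrow> f p = 0"
proof -
  have "\<forall>p. p \<ge> a0 \<longrightarrow> M - p \<le> int k \<longrightarrow> f p = 0" for k :: nat
  proof (induction k)
    case 0 then show ?case using assms(3) by auto
  next
    case (Suc k)
    show ?case
    proof (intro allI impI)
      fix p assume p: "p \<ge> a0" "M - p \<le> int (Suc k)"
      have "f (p+1) = 0" using Suc p by auto
      then have "b p * f p = 0" using assms(1)[OF p(1)] by simp
      then show "f p = 0" using assms(2)[OF p(1)] by simp
    qed
  qed
  then show "p \<ge> a0 \<Longrightarrow> f p = 0" by (metis nat_0_le nat_le_iff zle_diff1_eq le_cases int_ops(1) )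
qed

definition rowb :: "(int \<Rightarrow> int \<Rightarrow> complex) \<Rightarrow> bool" where
  "rowb T \<longleftrightarrow> (\<exists>N. \<forall>p\<ge>N. \<forall>q. T p q = 0)"

lemma finite_rowb:
  assumes "finite {(p,q). T p q \<noteq> 0}" shows "rowb T"
proof -
  let ?F = "fst ` {(p,q). T p q \<noteq> 0}"
  have fin: "finite ?F" using assms by simp
  obtain N where N: "\<forall>x\<in>?F. x < N"
  proof (cases "?F = {}")
    case True then show ?thesis using that by auto
  next
    case False then show ?thesis using that[of "Max ?F + 1"] fin by (meson Max_ge zless_add1_eq le_imp_less_or_eq order.strict_trans1 less_add_one)
  qed
  have "T p q = 0" if "p \<ge> N" for p q
  proof (rule ccontr)
    assume "T p q \<noteq> 0"
    then have "p \<in> ?F" by force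
    then show False using N that by auto
  qed
  then show ?thesis unfolding rowb_def by blast
qed



fun cc :: "(int \<Rightarrow> complex) \<Rightarrow> nat \<Rightarrow> complex" where
  "cc \<alpha> 0 = 0"
| "cc \<alpha> (Suc 0) = \<alpha> 1 / 2"
| "cc \<alpha> (Suc (Suc 0)) = \<alpha> 2 / 3"
| "cc \<alpha> (Suc (Suc (Suc n))) = (\<alpha> (int n + 3) + of_nat (n+1) * cc \<alpha> (Suc (Suc n))) / of_nat (n+4)"

definition ci :: "(int \<Rightarrow> complex) \<Rightarrow> int \<Rightarrow> complex" where
  "ci \<alpha> p = (if p > 0 then cc \<alpha> (nat p) else if p < 0 then - cc \<alpha> (nat (-p)) else 0)"

lemma ci_neg: "ci \<alpha> (-p) = - ci \<alpha> p"
  by (auto simp: ci_def)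

lemma ci_pos:
  assumes "p \<ge> 1"
  shows "of_int (2-p) * ci \<alpha> (p-1) + of_int (1+p) * ci \<alpha> p = \<alpha> p"
proof -
  consider "p = 1" | "p = 2" | n where "p = int n + 3"
    using assms by (metis add.commute add_le_cancel_left le_add_diff_inverse2 less_le not_less zle_iff_zadd
        one_add_one numeral_Bit1 numeral_One zle_add1_eq_le)
  then show ?thesis
  proof cases
    case 1 then show ?thesis by (simp add: ci_def)
  next
    case 2
    have "nat 2 = Suc (Suc 0)" by simp
    then show ?thesis using 2 by (simp add: ci_def numeral_2_eq_2)
  next
    case 3
    have a: "nat p = Suc (Suc (Suc n))" "nat (p - 1) = Suc (Suc n)" using 3 by auto
    have b: "ci \<alpha> p = (\<alpha> p + of_nat (n+1) * cc \<alpha> (Suc (Suc n))) / of_nat (n+4)"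
      using 3 a by (simp add: ci_def add.commute)
    have c: "ci \<alpha> (p-1) = cc \<alpha> (Suc (Suc n))" using 3 a by (simp add: ci_def)
    have d: "(of_int (1+p) :: complex) = of_nat (n+4)" "(of_int (2-p) :: complex) = - of_nat (n+1)"
      using 3 by simp_all
    have e: "(of_nat (n+4) :: complex) \<noteq> 0" by (metis of_nat_eq_0_iff add_eq_0_iff_both_eq_0 zero_neq_numeral)
    show ?thesis unfolding b c d using e by (simp add: field_simps)
  qed
qed

lemma ci_eq:
  assumes "\<And>p. \<alpha> (1-p) = - \<alpha> p"
  shows "of_int (2-p) * ci \<alpha> (p-1) + of_int (1+p) * ci \<alpha> p = \<alpha> p"
proof (cases "p \<ge> 1")
  case True then show ?thesis by (rule ci_pos)
next
  case False
  define p' where "p' = 1 - p"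
  have p': "p' \<ge> 1" using False p'_def by simp
  have "of_int (2-p') * ci \<alpha> (p'-1) + of_int (1+p') * ci \<alpha> p' = \<alpha> p'" by (rule ci_pos[OF p'])
  moreover have "ci \<alpha> (p-1) = - ci \<alpha> p'" using ci_neg[of \<alpha> p'] p'_def by simp
  moreover have "ci \<alpha> p = - ci \<alpha> (p'-1)" using ci_neg[of \<alpha> "p'-1"] p'_def by simp
  moreover have "\<alpha> p = - \<alpha> p'" using assms[of p] p'_def by simp
  moreover have "2 - p = 1 + p'" "1 + p = 2 - p'" using p'_def by auto
  ultimately show ?thesis by (metis (no_types, lifting) add.commute minus_add_distrib mult_minus_right)
qed



lemma La_diff: "La m (\<lambda>p q. X p q - Y p q) p q = La m X p q - La m Y p q"
  by (simp add: La_def algebra_simps)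

lemma La_zero: "La m (\<lambda>p q. 0) p q = 0"
  by (simp add: La_def)

lemma La_anti: assumes "\<And>p q. v q p = - v p q" shows "La m v q p = - La m v p q"
  unfolding La_def using assms[of p "q-m"] assms[of "p-m" q] by (simp add: algebra_simps)

lemma nzi: "k \<noteq> 0 \<Longrightarrow> (of_int k :: complex) \<noteq> 0" by simp

lemma La0: "La 0 X p q = - of_int (p+q) * X p q"
  by (simp add: La_def algebra_simps)

lemma core:
  fixes A :: "int \<Rightarrow> int \<Rightarrow> int \<Rightarrow> complex"
  assumes fin: "\<And>m. finite {(p,q). A m p q \<noteq> 0}"
    and anti: "\<And>m p q. A m q p = - A m p q"
    and coc: "\<And>m n p q. of_int (m-n) * A (m+n) p q = La m (A n) p q - La n (A m) p q"
  shows "\<exists>v. finite {(p,q). v p q \<noteq> 0} \<and> (\<forall>p q. v q p = - v p q) \<and> (\<forall>m. A m = La m v)"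
proof -
  define \<alpha> where "\<alpha> p = A 1 p (1-p)" for p
  have \<alpha>_anti: "\<alpha> (1-p) = - \<alpha> p" for p using anti[of 1 "1-p" p] by (simp add: \<alpha>_def)
  define c where "c = ci \<alpha>"
  have c_neg: "c (-p) = - c p" for p by (simp add: c_def ci_neg)
  have c_eq: "of_int (2-p) * c (p-1) + of_int (1+p) * c p = \<alpha> p" for p
    unfolding c_def by (rule ci_eq[of \<alpha>, OF \<alpha>_anti])
  define v where "v p q = (if p + q \<noteq> 0 then - A 0 p q / of_int (p+q) else c p)" for p q
  have v_anti: "v q p = - v p q" for p q
  proof (cases "p + q = 0")
    case True then have "q = -p" by simp
    then show ?thesis using c_neg by (simp add: v_def)
  next
    case False then show ?thesis using anti[of 0 p q] by (simp add: v_def add.commute)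
  qed
  have v_diag: "v p (-p) = c p" for p by (simp add: v_def)
  define E where "E m = (\<lambda>p q. A m p q - La m v p q)" for m
  have Ecoc: "of_int (m-n) * E (m+n) p q = La m (E n) p q - La n (E m) p q" for m n p q
  proof -
    have "La m (E n) p q - La n (E m) p q
        = (La m (A n) p q - La n (A m) p q) - (La m (La n v) p q - La n (La m v) p q)"
      unfolding E_def La_diff by simp
    also have "\<dots> = of_int (m-n) * A (m+n) p q - of_int (m-n) * La (m+n) v p q"
      using coc[of m n p q] La_rep[of m n v p q] by simp
    finally show ?thesis by (simp add: E_def algebra_simps)
  qed
  have Eanti: "E m q p = - E m p q" for m p q
    using anti[of m p q] La_anti[of v m p q, OF v_anti] by (simp add: E_def)
  have E0off: "E 0 p q = 0" if "p + q \<noteq> 0" for p q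
  proof -
    have nz: "(of_int (p+q)::complex) \<noteq> 0" using that by (metis of_int_eq_0_iff)
    have "E 0 p q = A 0 p q + of_int (p+q) * (- A 0 p q / of_int (p+q))"
      using that by (simp add: E_def La0 v_def del: of_int_add)
    also have "\<dots> = 0" using nz by (simp del: of_int_add)
    finally show ?thesis .
  qed
  define u where "u p = E 0 p (-p)" for p
  have u_eq: "of_int (2-p) * u (p-1) + of_int (1+p) * u p = 0" for p
  proof -
    have "of_int (0-1) * E (0+1) p (1-p) = La 0 (E 1) p (1-p) - La 1 (E 0) p (1-p)"
      by (rule Ecoc)
    then have "La 1 (E 0) p (1-p) = 0" by (simp add: La0)
    then show ?thesis by (simp add: La_def u_def algebra_simps)
  qed
  have u0: "u 0 = 0" using Eanti[of 0 0 0] by (simp add: u_def)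
  have u_pos: "u p = 0" if "p \<ge> 0" for p
  proof (rule up_zero[of u 0 "\<lambda>p. of_int (1+p)" "\<lambda>p. of_int (2-p)"])
    show "u 0 = 0" by (rule u0)
    show "0 \<le> p" by (rule that)
    fix p :: int assume "p > 0"
    show "of_int (1+p) * u p + of_int (2-p) * u (p-1) = 0" using u_eq[of p] by (simp only: add.commute)
    show "(of_int (1+p) :: complex) \<noteq> 0" by (rule nzi) (use \<open>p>0\<close> in simp)
  qed
  have u_all: "u p = 0" for p
  proof (cases "p \<ge> 0")
    case True then show ?thesis by (rule u_pos)
  next
    case False
    have "u p = - u (-p)" using Eanti[of 0 p "-p"] by (simp add: u_def)
    then show ?thesis using u_pos[of "-p"] False by simp
  qed
  have E0: "E 0 p q = 0" for p q
  proof (cases "p + q = 0")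
    case True then have "q = -p" by simp
    then show ?thesis using u_all[of p] by (simp add: u_def)
  qed (rule E0off)
  have E0fun: "E 0 = (\<lambda>p q. 0)" using E0 by (intro ext) simp
  have conc: "E m p q = 0" if "p + q \<noteq> m" for m p q
  proof -
    have "of_int (0-m) * E (0+m) p q = La 0 (E m) p q - La m (E 0) p q" by (rule Ecoc)
    also have "La m (E 0) p q = 0" by (simp add: E0fun La_zero)
    finally have "of_int (p + q - m) * E m p q = 0" by (simp add: La0 algebra_simps)
    moreover have "(of_int (p + q - m) :: complex) \<noteq> 0" by (rule nzi) (use that in simp)
    ultimately show ?thesis by simp
  qed
  have E1: "E 1 p q = 0" for p q
  proof (cases "p + q = 1")
    case True then have q: "q = 1 - p" by simp
    have "La 1 v p (1-p) = of_int (2-p) * v (p-1) (1-p) + of_int (1+p) * v p (-p)"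
      by (simp add: La_def)
    also have "\<dots> = \<alpha> p" using c_eq[of p] v_diag[of p] v_diag[of "p-1"] by simp
    finally show ?thesis using q by (simp add: E_def \<alpha>_def)
  qed (rule conc)
  have E1fun: "E 1 = (\<lambda>p q. 0)" using E1 by (intro ext) simp
  define e where "e p = E (-1) p (-1-p)" for p
  have Lm1: "La 1 (E (-1)) p q = 0" for p q
    using Ecoc[of 1 "-1" p q] by (simp add: E0fun E1fun La_zero)
  have e_eq: "of_int (2+p) * e p + of_int (2-p) * e (p-1) = 0" for p
  proof -
    have h: "-1 - (p-1) = -p" "- p - 1 = -1 - p" "2 * 1 - - p = 2 + p" by simp_all
    have "La 1 (E (-1)) p (-p) = of_int (2-p) * e (p-1) + of_int (2+p) * e p"
      unfolding La_def e_def h by simp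
    then show ?thesis using Lm1[of p "-p"] by (simp add: add.commute)
  qed
  have e_ge2: "e p = 0" if "p \<ge> 2" for p
  proof (rule up_zero[of e 2 "\<lambda>p. of_int (2+p)" "\<lambda>p. of_int (2-p)"])
    show "e 2 = 0" using e_eq[of 2] by simp
    show "2 \<le> p" by (rule that)
    fix p :: int assume "p > 2"
    show "of_int (2+p) * e p + of_int (2-p) * e (p-1) = 0" by (rule e_eq)
    show "(of_int (2+p) :: complex) \<noteq> 0" by (rule nzi) (use \<open>p>2\<close> in simp)
  qed
  define z where "z p = E (-2) p (-2-p)" for p
  have z_eq: "of_int (3+p) * z p + of_int (2-p) * z (p-1) = 3 * e p" for p
  proof -
    have "of_int (1-(-2)) * E (1+(-2)) p (-1-p) = La 1 (E (-2)) p (-1-p) - La (-2) (E 1) p (-1-p)"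
      by (rule Ecoc)
    moreover have "La 1 (E (-2)) p (-1-p) = of_int (2-p) * z (p-1) + of_int (3+p) * z p"
    proof -
      have h: "-1 - p - 1 = -2 - p" "-2 - (p-1) = -1 - p" "2 * 1 - (-1-p) = 3 + p" by simp_all
      show ?thesis unfolding La_def z_def h by simp
    qed
    ultimately show ?thesis by (simp add: e_def E1fun La_zero add.commute)
  qed
  have z_ge2: "z p = 0" if "p \<ge> 2" for p
  proof (rule up_zero[of z 2 "\<lambda>p. of_int (3+p)" "\<lambda>p. of_int (2-p)"])
    show "z 2 = 0" using z_eq[of 2] e_ge2[of 2] by simp
    show "2 \<le> p" by (rule that)
    fix p :: int assume "p > 2"
    show "of_int (3+p) * z p + of_int (2-p) * z (p-1) = 0" using z_eq[of p] e_ge2[of p] \<open>p>2\<close> by simp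
    show "(of_int (3+p) :: complex) \<noteq> 0" by (rule nzi) (use \<open>p>2\<close> in simp)
  qed
  obtain N0 where N0: "\<And>p q. p \<ge> N0 \<Longrightarrow> A 0 p q = 0" using finite_rowb[OF fin[of 0]] unfolding rowb_def by blast
  obtain N1 where N1: "\<And>p q. p \<ge> N1 \<Longrightarrow> A 1 p q = 0" using finite_rowb[OF fin[of 1]] unfolding rowb_def by blast
  obtain N2 where N2: "\<And>p q. p \<ge> N2 \<Longrightarrow> A (-2) p q = 0" using finite_rowb[OF fin[of "-2"]] unfolding rowb_def by blast
  have tail3: "of_int (-4-p) * c (p+2) + of_int (p-2) * c p = 0" if "p \<ge> 2" "p \<ge> N2" for p
  proof -
    have h: "p - -2 = p + 2" "-2 - p - -2 = -p" "2 * -2 - (-2-p) = p - 2" "2 * -2 - p = -4 - p" by simp_all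
    have "La (-2) v p (-2-p) = of_int (-4-p) * v (p+2) (-2-p) + of_int (p-2) * v p (-p)"
      unfolding La_def h by simp
    moreover have "v (p+2) (-2-p) = c (p+2)" by (simp add: v_def)
    moreover have "z p = A (-2) p (-2-p) - La (-2) v p (-2-p)" by (simp add: z_def E_def)
    ultimately have "- (of_int (-4-p) * c (p+2)) = of_int (p-2) * c p"
      using z_ge2[OF that(1)] N2[OF that(2)] v_diag[of p] by simp
    then show ?thesis by (metis add.commute neg_eq_iff_add_eq_0)
  qed
  define Nc where "Nc = max 2 (max N1 N2)"
  have c_tail: "c p = 0" if "p \<ge> Nc" for p
  proof -
    define P where "P = (of_int p :: complex)"
    define X where "X = c p"
    define Y where "Y = c (p+1)"
    define Z where "Z = c (p+2)"
    have a1: "\<alpha> (p+1) = 0" "\<alpha> (p+2) = 0" using N1 that by (auto simp: \<alpha>_def Nc_def)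
    have e1: "(1 - P) * X + (P+2) * Y = 0" using c_eq[of "p+1"] a1 by (simp add: P_def X_def Y_def algebra_simps)
    have e2: "(- P) * Y + (P+3) * Z = 0" using c_eq[of "p+2"] a1 by (simp add: P_def Y_def Z_def algebra_simps)
    have e3: "(-4 - P) * Z + (P-2) * X = 0" using tail3[of p] that by (simp add: P_def X_def Z_def Nc_def)
    have "-12 * X = (P+2)*(P+3)*((-4 - P) * Z + (P-2) * X) + (P+2)*(P+4)*((- P) * Y + (P+3) * Z)
       + P*(P+4)*((1 - P) * X + (P+2) * Y)"
      by (simp add: algebra_simps)
    then have "-12 * X = 0" using e1 e2 e3 by simp
    then show ?thesis by (simp add: X_def)
  qed
  have v_fin: "finite {(p,q). v p q \<noteq> 0}"
  proof (rule finite_subset[of _ "{(p,q). A 0 p q \<noteq> 0} \<union> (\<lambda>p. (p,-p)) ` {-Nc..Nc}"])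
    show "finite ({(p,q). A 0 p q \<noteq> 0} \<union> (\<lambda>p. (p,-p)) ` {-Nc..Nc})" using fin[of 0] by simp
    show "{(p,q). v p q \<noteq> 0} \<subseteq> {(p,q). A 0 p q \<noteq> 0} \<union> (\<lambda>p. (p,-p)) ` {-Nc..Nc}"
    proof
      fix pq assume "pq \<in> {(p,q). v p q \<noteq> 0}"
      then obtain p q where pq: "pq = (p,q)" and nz: "v p q \<noteq> 0" by auto
      show "pq \<in> {(p,q). A 0 p q \<noteq> 0} \<union> (\<lambda>p. (p,-p)) ` {-Nc..Nc}"
      proof (cases "p + q = 0")
        case True
        then have q: "q = -p" by simp
        have "c p \<noteq> 0" using nz q v_diag by simp
        then have "p < Nc" "-p < Nc" using c_tail[of p] c_tail[of "-p"] c_neg[of p] by force+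
        then show ?thesis using q pq by auto
      next
        case False then show ?thesis using nz pq by (simp add: v_def)
      qed
    qed
  qed
  define Nv where "Nv = max N0 Nc"
  have v_row: "v p q = 0" if "p \<ge> Nv" for p q
    using that N0[of p q] c_tail[of p] by (simp add: v_def Nv_def)
  obtain NA2 where NA2: "\<And>p q. p \<ge> NA2 \<Longrightarrow> A 2 p q = 0" using finite_rowb[OF fin[of 2]] unfolding rowb_def by blast
  have E2_row: "E 2 p q = 0" if "p \<ge> max NA2 (Nv+2)" for p q
    using that NA2[of p q] v_row[of "p-2" q] v_row[of p "q-2"] by (simp add: E_def La_def)
  define x where "x p = E 2 p (2-p)" for p
  have x_eq: "of_int (p-3) * x p + of_int (-2-p) * x (p+1) = of_int (4-p) * e (p-2) + of_int (3+p) * e p" for p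
  proof -
    have "of_int (2-(-1)) * E (2+(-1)) p (1-p) = La 2 (E (-1)) p (1-p) - La (-1) (E 2) p (1-p)"
      by (rule Ecoc)
    then have 1: "La (-1) (E 2) p (1-p) = La 2 (E (-1)) p (1-p)" by (simp add: E1fun)
    have h1: "p - -1 = p+1" "1-p - -1 = 2-p" "2 * -1 - p = -2-p" "2 * -1 - (1-p) = p-3" "2 - (p+1) = 1 - p"
      by simp_all
    have 2: "La (-1) (E 2) p (1-p) = of_int (-2-p) * x (p+1) + of_int (p-3) * x p"
      unfolding La_def x_def h1 by simp
    have h2: "2*2-p = 4-p" "2*2-(1-p) = 3+p" "1-p-2 = -1-p" "-1-(p-2) = 1-p" by simp_all
    have 3: "La 2 (E (-1)) p (1-p) = of_int (4-p) * e (p-2) + of_int (3+p) * e p"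
      unfolding La_def e_def h2 by simp
    show ?thesis using 1 2 3 by (simp add: add.commute)
  qed
  have x_ge4: "x p = 0" if "p \<ge> 4" for p
  proof (rule down_zero[of 4 "\<lambda>p. of_int (p-3)" x "\<lambda>p. of_int (-2-p)" "max NA2 (Nv+2)"])
    fix p :: int assume p: "p \<ge> 4"
    show "of_int (p-3) * x p + of_int (-2-p) * x (p+1) = 0" using x_eq[of p] e_ge2[of p] e_ge2[of "p-2"] p by simp
    show "(of_int (p-3) :: complex) \<noteq> 0" by (rule nzi) (use p in simp)
  next
    fix p :: int assume "p \<ge> max NA2 (Nv+2)"
    then show "x p = 0" using E2_row by (simp add: x_def)
  qed (rule that)
  have e1: "e 1 = 0" using x_eq[of 3] x_ge4[of 4] e_ge2[of 3] by simp
  have e0: "e 0 = 0" using e_eq[of 1] e1 by simp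
  have e_all: "e p = 0" for p
  proof -
    have pos: "e p = 0" if "p \<ge> 0" for p
      using e0 e1 e_ge2[of p] that by (cases "p = 0 \<or> p = 1") auto
    show ?thesis
    proof (cases "p \<ge> 0")
      case True then show ?thesis by (rule pos)
    next
      case False
      have "e p = - e (-1-p)" using Eanti[of "-1" p "-1-p"] by (simp add: e_def)
      then show ?thesis using pos[of "-1-p"] False by simp
    qed
  qed
  have Em1: "E (-1) = (\<lambda>p q. 0)"
  proof (intro ext)
    fix p q show "E (-1) p q = 0"
    proof (cases "p + q = -1")
      case True then have "q = -1-p" by simp
      then show ?thesis using e_all[of p] by (simp add: e_def)
    qed (rule conc)
  qed
  have x_eq0: "of_int (p-3) * x p + of_int (-2-p) * x (p+1) = 0" for p
    using x_eq[of p] e_all by simp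
  have x1: "x 1 = 0" using Eanti[of 2 1 1] by (simp add: x_def)
  have x2: "x 2 = 0" using x_eq0[of 1] x1 by simp
  have x3: "x 3 = 0" using x_eq0[of 2] x2 by simp
  have x_pos: "x p = 0" if "p \<ge> 1" for p
  proof -
    have "p = 1 \<or> p = 2 \<or> p = 3 \<or> p \<ge> 4" using that by presburger
    then show ?thesis using x1 x2 x3 x_ge4 by auto
  qed
  have E2: "E 2 = (\<lambda>p q. 0)"
  proof (intro ext)
    fix p q show "E 2 p q = 0"
    proof (cases "p + q = 2")
      case True then have q: "q = 2-p" by simp
      show ?thesis
      proof (cases "p \<ge> 1")
        case True then show ?thesis using x_pos[of p] q by (simp add: x_def)
      next
        case False
        have "E 2 p q = - x (2-p)" using Eanti[of 2 p q] q by (simp add: x_def)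
        then show ?thesis using x_pos[of "2-p"] False by simp
      qed
    qed (rule conc)
  qed
  have z_eq0: "of_int (3+p) * z p + of_int (2-p) * z (p-1) = 0" for p
    using z_eq[of p] e_all by simp
  have zm1: "z (-1) = 0" using Eanti[of "-2" "-1" "-1"] by (simp add: z_def)
  have z0: "z 0 = 0" using z_eq0[of 0] zm1 by simp
  have z1: "z 1 = 0" using z_eq0[of 1] z0 by simp
  have z_pos: "z p = 0" if "p \<ge> -1" for p
  proof -
    have "p = -1 \<or> p = 0 \<or> p = 1 \<or> p \<ge> 2" using that by presburger
    then show ?thesis using zm1 z0 z1 z_ge2 by auto
  qed
  have Em2: "E (-2) = (\<lambda>p q. 0)"
  proof (intro ext)
    fix p q show "E (-2) p q = 0"
    proof (cases "p + q = -2")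
      case True then have q: "q = -2-p" by simp
      show ?thesis
      proof (cases "p \<ge> -1")
        case True then show ?thesis using z_pos[of p] q by (simp add: z_def)
      next
        case False
        have "E (-2) p q = - z (-2-p)" using Eanti[of "-2" p q] q by (simp add: z_def)
        then show ?thesis using z_pos[of "-2-p"] False by simp
      qed
    qed (rule conc)
  qed
  have Epos: "E n = (\<lambda>p q. 0)" if "n \<ge> 2" for n
    using that
  proof (induction n rule: int_ge_induct)
    case base then show ?case by (rule E2)
  next
    case (step i)
    have "of_int (1-i) * E (1+i) p q = La 1 (E i) p q - La i (E 1) p q" for p q by (rule Ecoc)
    then have "of_int (1-i) * E (i+1) p q = 0" for p q using step by (simp add: E1fun La_zero add.commute)
    moreover have "(of_int (1-i) :: complex) \<noteq> 0" by (rule nzi) (use step in simp)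
    ultimately show ?case by (intro ext) simp
  qed
  have Eneg: "E (-k) = (\<lambda>p q. 0)" if "k \<ge> 2" for k
    using that
  proof (induction k rule: int_ge_induct)
    case base then show ?case using Em2 by simp
  next
    case (step i)
    have "of_int (-1-(-i)) * E (-1+(-i)) p q = La (-1) (E (-i)) p q - La (-i) (E (-1)) p q" for p q by (rule Ecoc)
    then have "of_int (i-1) * E (-1-i) p q = 0" for p q using step by (simp add: Em1 La_zero)
    moreover have "(of_int (i-1) :: complex) \<noteq> 0" by (rule nzi) (use step in simp)
    ultimately have "E (-1-i) = (\<lambda>p q. 0)" by (intro ext) simp
    moreover have "-(i+1) = -1-i" by simp
    ultimately show ?case by metis
  qed
  have Eall: "E m = (\<lambda>p q. 0)" for m
  proof -
    consider "m \<ge> 2" | "m = 1" | "m = 0" | "m = -1" | "m \<le> -2" by linarith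
    then show ?thesis
    proof cases
      case 1 then show ?thesis by (rule Epos)
    next
      case 2 then show ?thesis using E1fun by simp
    next
      case 3 then show ?thesis using E0fun by simp
    next
      case 4 then show ?thesis using Em1 by simp
    next
      case 5 then show ?thesis using Eneg[of "-m"] by simp
    qed
  qed
  have "A m = La m v" for m
  proof (intro ext)
    fix p q show "A m p q = La m v p q" using fun_cong[OF fun_cong[OF Eall[of m], of p], of q] by (simp add: E_def)
  qed
  then show ?thesis using v_fin v_anti by blast
qed



lemma lin_sum:
  assumes lin: "W_linear_to_WW d" and fs: "finite S"
  shows "(\<lambda>k. \<Sum>a\<in>S. x a * witt_L a k) \<in> W \<and>
         d (\<lambda>k. \<Sum>a\<in>S. x a * witt_L a k) = (\<lambda>p q. \<Sum>a\<in>S. x a * d (witt_L a) p q)"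
  using fs
proof (induction S rule: finite_induct)
  case empty
  have z: "(\<lambda>k::int. 0::complex) \<in> W" by (simp add: W_def)
  have hom: "\<forall>c. \<forall>f\<in>W. d (\<lambda>n. c * f n) = (\<lambda>p q. c * d f p q)"
    using lin unfolding W_linear_to_WW_def by blast
  show ?case using z hom[rule_format, OF z, of 0] by simp
next
  case (insert a S)
  define g where "g = (\<lambda>k. \<Sum>a\<in>S. x a * witt_L a k)"
  define h where "h = (\<lambda>k. x a * witt_L a k)"
  have gW: "g \<in> W" using insert g_def by simp
  have hW: "h \<in> W"
  proof -
    have "{k. h k \<noteq> 0} \<subseteq> {a}" by (auto simp: h_def witt_L_def)
    then show ?thesis unfolding W_def using finite_subset by auto
  qed
  have dh: "d h = (\<lambda>p q. x a * d (witt_L a) p q)"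
    using lin L_in_W[of a] unfolding W_linear_to_WW_def h_def by blast
  have dg: "d g = (\<lambda>p q. \<Sum>a\<in>S. x a * d (witt_L a) p q)" using insert g_def by simp
  have sumeq: "(\<lambda>k. \<Sum>a\<in>insert a S. x a * witt_L a k) = (\<lambda>n. h n + g n)"
    using insert by (simp add: h_def g_def)
  have "(\<lambda>n. h n + g n) \<in> W"
  proof -
    have "{k. h k + g k \<noteq> 0} \<subseteq> {k. h k \<noteq> 0} \<union> {k. g k \<noteq> 0}" by auto
    then show ?thesis using hW gW unfolding W_def using finite_subset by auto
  qed
  moreover have "d (\<lambda>n. h n + g n) = (\<lambda>p q. d h p q + d g p q)"
    using lin hW gW unfolding W_linear_to_WW_def by blast
  ultimately show ?case using insert sumeq dh dg by simp
qed

theorem theoremP0: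
  shows "(\<forall>d. cocycle d \<longrightarrow> coboundary d) \<and>
         (\<forall>\<delta>. witt_lie_bialgebra \<delta> \<longrightarrow> coboundary \<delta>)"
proof -
  have main: "coboundary d" if cd: "cocycle d" for d
  proof -
    have lin: "W_linear_to_WW d" using cd unfolding cocycle_def by blast
    define A where "A m = d (witt_L m)" for m
    have AWW: "A m \<in> WW" for m using lin L_in_W unfolding W_linear_to_WW_def A_def by blast
    have fin: "finite {(p,q). A m p q \<noteq> 0}" for m using AWW[of m] unfolding WW_def by blast
    have anti: "A m q p = - A m p q" for m p q using AWW[of m] unfolding WW_def by blast
    have coc: "of_int (m-n) * A (m+n) p q = La m (A n) p q - La n (A m) p q" for m n p q
    proof -
      have "d (witt_bracket (witt_L m) (witt_L n)) = (\<lambda>p q. ad_act (witt_L m) (A n) p q - ad_act (witt_L n) (A m) p q)"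
        using cd L_in_W unfolding cocycle_def A_def by blast
      moreover have "d (witt_bracket (witt_L m) (witt_L n)) = (\<lambda>p q. of_int (m-n) * A (m+n) p q)"
        unfolding bracket_L using lin L_in_W[of "m+n"] unfolding W_linear_to_WW_def A_def by blast
      ultimately show ?thesis by (simp add: ad_act_L fun_eq_iff)
    qed
    obtain v where vfin: "finite {(p,q). v p q \<noteq> 0}" and vanti: "\<forall>p q. v q p = - v p q"
      and vA: "\<forall>m. A m = La m v"
      using core[of A, OF fin anti coc] by blast
    have vWW: "v \<in> WW" unfolding WW_def using vfin vanti by blast
    have "d x = ad_act x v" if xW: "x \<in> W" for x
    proof -
      define S where "S = {a. x a \<noteq> 0}"
      have fS: "finite S" using xW by (simp add: W_def S_def)
      have xeq: "x = (\<lambda>k. \<Sum>a\<in>S. x a * witt_L a k)"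
      proof
        fix k
        have "(\<Sum>a\<in>S. x a * witt_L a k) = (\<Sum>a\<in>S. if a = k then x a else 0)"
          by (intro sum.cong) (auto simp: witt_L_def)
        also have "\<dots> = (if k \<in> S then x k else 0)" using fS by (simp add: sum.delta)
        also have "\<dots> = x k" by (auto simp: S_def)
        finally show "x k = (\<Sum>a\<in>S. x a * witt_L a k)" by simp
      qed
      have "d x = (\<lambda>p q. \<Sum>a\<in>S. x a * A a p q)"
        using lin_sum[OF lin fS, of x] xeq unfolding A_def by metis
      also have "\<dots> = ad_act x v"
        unfolding ad_act_def S_def[symmetric] using vA by (simp add: La_def)
      finally show ?thesis .
    qed
    then show ?thesis unfolding coboundary_def using lin vWW by blast
  qed
  show ?thesis using main unfolding witt_lie_bialgebra_def by blast
qed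

end
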